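(* Let $G$ be a finite simple graph on the vertex set $[d]=\{1,\dots,d\}$, let $k\ge 1$, and let $f,g$ be $k$-colorings of $G$. Then $f\sim_k g$ if and only if ${\bf x}_f-{\bf x}_g\in J_G$.
   Context: A $k$-coloring of a graph $H$ is a map $f:V(H)\to[k]$ (not necessarily surjective) with $f(u)\neq f(v)$ for every edge $\{u,v\}$ of $H$. Given a $k$-coloring $f$ of $H$ and colors $1\le i<j\le k$, let $C$ be a connected component of the induced subgraph $H[f^{-1}(i)\cup f^{-1}(j)]$; the coloring that agrees with $f$ outside $C$ and interchanges the colors $i$ and $j$ on $C$ is said to be obtained from $f$ by a Kempe switching. Two $k$-colorings $f,g$ of $H$ are Kempe equivalent, written $f\sim_k g$, if there is a finite sequence $f=f_0,f_1,\dots,f_s=g$ of $k$-colorings of $H$ with each $f_i$ obtained from $f_{i-1}$ by a Kempe switching. A stable set of $G$ is a subset $S\subseteq[d]$ containing no edge of $G$ (so $\emptyset$ and all singletons are stable); $S(G)$ denotes the set of stable sets. Let $\mathbb{K}$ be a field and $R[G]=\mathbb{K}[x_S : S\in S(G)]$ the polynomial ring with one variable of degree $1$ for each stable set. For a $k$-coloring $f$ of an induced subgraph $G[W]$ ($W\subseteq[d]$) put ${\bf x}_f=\prod_{\ell=1}^k x_{f^{-1}(\ell)}$ (each $f^{-1}(\ell)$ is a stable set, possibly empty). The $2$-coloring ideal $J_G\subseteq R[G]$ is the ideal generated by all ${\bf x}_f-{\bf x}_g$ where $f,g$ are $2$-colorings of the same induced subgraph $G[W]$ of $G$ (equivalently,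 by all $x_{S_1}x_{S_2}-x_{S_3}x_{S_4}$ with $S_i\in S(G)$, $S_1\cap S_2=S_3\cap S_4=\emptyset$ and $S_1\cup S_2=S_3\cup S_4$). *)

theory Defs
  imports Main "HOL-Library.Poly_Mapping" "HOL-Library.FuncSet"
begin

definition simple_graph :: "nat \<Rightarrow> nat set set \<Rightarrow> bool" where
  "simple_graph d E \<longleftrightarrow> (\<forall>e\<in>E. \<exists>u v. e = {u, v} \<and> u \<noteq> v \<and> u \<in> {1..d} \<and> v \<in> {1..d})"

definition coloring :: "nat set set \<Rightarrow> nat set \<Rightarrow> nat \<Rightarrow> (nat \<Rightarrow> nat) \<Rightarrow> bool" where
  "coloring E W k f \<longleftrightarrow> f \<in> W \<rightarrow>\<^sub>E {1..k} \<and>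
     (\<forall>u\<in>W. \<forall>v\<in>W. {u, v} \<in> E \<longrightarrow> f u \<noteq> f v)"

definition component :: "nat set set \<Rightarrow> nat set \<Rightarrow> nat \<Rightarrow> nat set" where
  "component E U v = {u. (v, u) \<in> {(a, b). a \<in> U \<and> b \<in> U \<and> {a, b} \<in> E}\<^sup>*}"

definition is_component :: "nat set set \<Rightarrow> nat set \<Rightarrow> nat set \<Rightarrow> bool" where
  "is_component E U C \<longleftrightarrow> (\<exists>v\<in>U. C = component E U v)"

definition kempe_switch :: "nat \<Rightarrow> nat set set \<Rightarrow> nat \<Rightarrow> (nat \<Rightarrow> nat) \<Rightarrow> (nat \<Rightarrow> nat) \<Rightarrow> bool" where
  "kempe_switch d E k f g \<longleftrightarrow> coloring E {1..d} k f \<and> coloring E {1..d} k g \<and>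
     (\<exists>i j C. 1 \<le> i \<and> i < j \<and> j \<le> k \<and>
        is_component E {v\<in>{1..d}. f v = i \<or> f v = j} C \<and>
        g = (\<lambda>v. if v \<in> C then (if f v = i then j else i) else f v))"

definition kempe_equiv :: "nat \<Rightarrow> nat set set \<Rightarrow> nat \<Rightarrow> (nat \<Rightarrow> nat) \<Rightarrow> (nat \<Rightarrow> nat) \<Rightarrow> bool" where
  "kempe_equiv d E k f g \<longleftrightarrow> (kempe_switch d E k)\<^sup>*\<^sup>* f g"

definition stable :: "nat \<Rightarrow> nat set set \<Rightarrow> nat set \<Rightarrow> bool" where
  "stable d E S \<longleftrightarrow> S \<subseteq> {1..d} \<and> (\<forall>e\<in>E. \<not> e \<subseteq> S)"

text \<open>Polynomials over the field 'a in variables indexed by sets of vertices;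
  the ring R[G] consists of those polynomials only involving variables x_S, S stable.\<close>
type_synonym 'a spoly = "(nat set \<Rightarrow>\<^sub>0 nat) \<Rightarrow>\<^sub>0 'a"

definition var :: "nat set \<Rightarrow> 'a::comm_ring_1 spoly" where
  "var S = Poly_Mapping.single (Poly_Mapping.single S 1) 1"

definition vars :: "'a::comm_ring_1 spoly \<Rightarrow> nat set set" where
  "vars p = \<Union> (Poly_Mapping.keys ` Poly_Mapping.keys p)"

definition RG :: "nat \<Rightarrow> nat set set \<Rightarrow> 'a::comm_ring_1 spoly set" where
  "RG d E = {p. \<forall>S\<in>vars p. stable d E S}"

definition xmon :: "nat set \<Rightarrow> nat \<Rightarrow> (nat \<Rightarrow> nat) \<Rightarrow> 'a::comm_ring_1 spoly" where
  "xmon W k f = (\<Prod>l\<in>{1..k}. var {v\<in>W. f v = l})"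

definition ideal_gen :: "'a::comm_ring_1 set \<Rightarrow> 'a set \<Rightarrow> 'a set" where
  "ideal_gen R B = {(\<Sum>b\<in>F. c b * b) | F c. finite F \<and> F \<subseteq> B \<and> (\<forall>b\<in>F. c b \<in> R)}"

definition J_gens :: "nat \<Rightarrow> nat set set \<Rightarrow> 'a::comm_ring_1 spoly set" where
  "J_gens d E = {xmon W 2 f - xmon W 2 g | W f g.
      W \<subseteq> {1..d} \<and> coloring E W 2 f \<and> coloring E W 2 g}"

definition J :: "nat \<Rightarrow> nat set set \<Rightarrow> 'a::comm_ring_1 spoly set" where
  "J d E = ideal_gen (RG d E) (J_gens d E)"

end

theory Submission
  imports Defs
begin

definition monox :: "nat set \<Rightarrow> nat \<Rightarrow> (nat \<Rightarrow> nat) \<Rightarrow> (nat set \<Rightarrow>\<^sub>0 nat)" where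
  "monox W k f = (\<Sum>l\<in>{1..k}. Poly_Mapping.single {v\<in>W. f v = l} 1)"

lemma prod_single:
  "finite L \<Longrightarrow> (\<Prod>l\<in>L. Poly_Mapping.single (a l) (1::'a::comm_ring_1)) = Poly_Mapping.single (\<Sum>l\<in>L. a l) 1"
  by (induction L rule: finite_induct) (auto simp: mult_single)

lemma xmon_eq: "(xmon W k f :: 'a::comm_ring_1 spoly) = Poly_Mapping.single (monox W k f) 1"
  unfolding xmon_def var_def monox_def by (simp add: prod_single)

lemma lookup_sum_single:
  "finite L \<Longrightarrow> Poly_Mapping.lookup (\<Sum>l\<in>L. Poly_Mapping.single (F l) (1::nat)) S = card {l\<in>L. F l = S}"
  by (simp add: lookup_sum lookup_single when_def sum.If_cases Int_def conj_commute)

lemma poly_decomp: "p = (\<Sum>w\<in>Poly_Mapping.keys p. Poly_Mapping.single w (Poly_Mapping.lookup p w))"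
  by (rule poly_mapping_eqI)
     (auto simp: lookup_sum lookup_single when_def in_keys_iff sum.delta' split: if_splits)

lemma sum_split2:
  fixes F :: "nat \<Rightarrow> 'b::comm_monoid_add"
  assumes "i \<in> L" "j \<in> L" "i \<noteq> j" "finite L"
  shows "(\<Sum>l\<in>L. F l) = (\<Sum>l\<in>L-{i,j}. F l) + F i + F j"
proof -
  have "(\<Sum>l\<in>L. F l) = F i + (\<Sum>l\<in>L-{i}. F l)" using assms by (simp add: sum.remove)
  also have "(\<Sum>l\<in>L-{i}. F l) = F j + (\<Sum>l\<in>L-{i}-{j}. F l)" using assms by (simp add: sum.remove)
  finally show ?thesis by (simp add: ac_simps Diff_insert2[symmetric] insert_commute)
qed

lemma coloring_iff: "coloring E W k f \<longleftrightarrow> (\<forall>v\<in>W. f v \<in> {1..k}) \<and> (\<forall>v. v \<notin> W \<longrightarrow> f v = undefined) \<and>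
     (\<forall>u\<in>W. \<forall>v\<in>W. {u, v} \<in> E \<longrightarrow> f u \<noteq> f v)"
  unfolding coloring_def PiE_iff extensional_def by auto

lemma coloring_eqI: "coloring E W k f \<Longrightarrow> coloring E W k' g \<Longrightarrow> (\<forall>v\<in>W. f v = g v) \<Longrightarrow> f = g"
  unfolding coloring_iff by (metis ext)

lemma kempe_recolor:
  assumes "coloring E {1..d} k h" "coloring E {1..d} k h'" "1 \<le> i" "i < j" "j \<le> k"
   "\<forall>v\<in>{1..d}. (h v \<in> {i,j} \<longleftrightarrow> h' v \<in> {i,j}) \<and> (h v \<notin> {i,j} \<longrightarrow> h' v = h v)"
  shows "kempe_equiv d E k h h'"
  using assms
proof (induction "card {v\<in>{1..d}. h v \<noteq> h' v}" arbitrary: h rule: less_induct)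
  case less
  show ?case
  proof (cases "\<exists>v\<in>{1..d}. h v \<noteq> h' v")
    case False
    then have "h = h'" using coloring_eqI less.prems by blast
    then show ?thesis by (simp add: kempe_equiv_def)
  next
    case True
    then obtain v where v: "v\<in>{1..d}" "h v \<noteq> h' v" by blast
    define R where "R = {(a, b). a \<in> {v\<in>{1..d}. h v = i \<or> h v = j} \<and> b \<in> {v\<in>{1..d}. h v = i \<or> h v = j} \<and> {a, b} \<in> E}"
    define U where "U = {v\<in>{1..d}. h v = i \<or> h v = j}"
    define C where "C = component E U v"
    define h1 where "h1 = (\<lambda>u. if u \<in> C then (if h u = i then j else i) else h u)"
    have Cdef: "C = {u. (v, u) \<in> R\<^sup>*}" unfolding C_def component_def R_def U_def by simp
    have P1: "h' u = h u" if "u \<in> {1..d}" "h u \<notin> {i,j}" for u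
      using bspec[OF less.prems(6) that(1)] that(2) by blast
    have P2: "h' u \<in> {i,j}" if "u \<in> {1..d}" "h u \<in> {i,j}" for u
      using bspec[OF less.prems(6) that(1)] that(2) by blast
    have P3: "h u \<in> {i,j}" if "u \<in> {1..d}" "h' u \<in> {i,j}" for u
      using bspec[OF less.prems(6) that(1)] that(2) by blast
    have hvij: "h v \<in> {i,j}" using P1 v by fastforce
    have vU: "v \<in> U" using hvij v unfolding U_def by auto
    have vC: "v \<in> C" unfolding Cdef by simp
    have CU: "C \<subseteq> U"
    proof
      fix u assume "u \<in> C"
      then have "(v, u) \<in> R\<^sup>*" unfolding Cdef by simp
      then show "u \<in> U"
        by (rule rtranclE) (use vU in \<open>auto simp: R_def U_def\<close>)
    qed
    have closed: "b \<in> C" if "a \<in> C" "b \<in> U" "{a,b} \<in> E" for a b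
    proof -
      have "a \<in> U" using that CU by blast
      then have "(a, b) \<in> R" using that unfolding R_def U_def by auto
      then show ?thesis using that(1) unfolding Cdef by (simp add: rtrancl_into_rtrancl)
    qed
    have hcol: "\<forall>u\<in>{1..d}. \<forall>w\<in>{1..d}. {u, w} \<in> E \<longrightarrow> h u \<noteq> h w"
      using less.prems(1) unfolding coloring_iff by blast
    have h'col: "\<forall>u\<in>{1..d}. \<forall>w\<in>{1..d}. {u, w} \<in> E \<longrightarrow> h' u \<noteq> h' w"
      using less.prems(2) unfolding coloring_iff by blast
    have diff: "h u \<noteq> h' u" if "u \<in> C" for u
    proof -
      have "(v, u) \<in> R\<^sup>*" using that unfolding Cdef by simp
      then show ?thesis
      proof (induction rule: rtrancl_induct)
        case base then show ?case using v by simp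
      next
        case (step a b)
        then have ab: "a \<in> {1..d}" "b \<in> {1..d}" "h a \<in> {i,j}" "h b \<in> {i,j}" "{a,b} \<in> E"
          unfolding R_def by auto
        then have "h' a \<in> {i,j}" "h' b \<in> {i,j}" using P2 by auto
        moreover have "h a \<noteq> h b" "h' a \<noteq> h' b" using hcol h'col ab by auto
        ultimately show ?case using step.IH ab less.prems(4) by auto
      qed
    qed
    have agree: "h1 u = h' u" if "u \<in> C" for u
    proof -
      have "u \<in> {1..d}" "h u \<in> {i,j}" using that CU unfolding U_def by auto
      then have "h' u \<in> {i,j}" using P2 by auto
      then show ?thesis using diff[OF that] \<open>h u \<in> {i,j}\<close> that unfolding h1_def by auto
    qed
    have col1: "coloring E {1..d} k h1"
      unfolding coloring_iff
    proof (intro conjI ballI allI impI)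
      fix u assume "u \<in> {1..d}"
      then show "h1 u \<in> {1..k}" using less.prems(1,3,4,5) unfolding coloring_iff h1_def by auto
    next
      fix u assume "u \<notin> {1..d}"
      then have "u \<notin> C" using CU unfolding U_def by auto
      then show "h1 u = undefined" using less.prems(1) \<open>u \<notin> {1..d}\<close> unfolding coloring_iff h1_def by auto
    next
      fix u w assume uw: "u \<in> {1..d}" "w \<in> {1..d}" "{u, w} \<in> E"
      have "{w, u} \<in> E" using uw(3) by (simp add: insert_commute)
      show "h1 u \<noteq> h1 w"
      proof (cases "u \<in> C"; cases "w \<in> C")
        assume "u \<in> C" "w \<in> C"
        then have "h u \<in> {i,j}" "h w \<in> {i,j}" using CU unfolding U_def by auto
        moreover have "h u \<noteq> h w" using hcol uw by blast
        ultimately show ?thesis using \<open>u \<in> C\<close> \<open>w \<in> C\<close> unfolding h1_def by auto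
      next
        assume "u \<in> C" "w \<notin> C"
        then have "w \<notin> U" using closed uw by blast
        then show ?thesis using \<open>u \<in> C\<close> \<open>w \<notin> C\<close> uw unfolding h1_def U_def by auto
      next
        assume "u \<notin> C" "w \<in> C"
        then have "u \<notin> U" using closed uw \<open>{w, u} \<in> E\<close> by blast
        then show ?thesis using \<open>u \<notin> C\<close> \<open>w \<in> C\<close> uw unfolding h1_def U_def by auto
      next
        assume "u \<notin> C" "w \<notin> C"
        then show ?thesis using hcol uw unfolding h1_def by auto
      qed
    qed
    have isc: "is_component E U C" unfolding is_component_def C_def using vU by blast
    have sw: "kempe_switch d E k h h1"
      unfolding kempe_switch_def
      apply (rule conjI, rule less.prems(1), rule conjI, rule col1)
      apply (rule exI[of _ i], rule exI[of _ j], rule exI[of _ C])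
      using less.prems(3,4,5) isc unfolding h1_def U_def by simp
    have sub: "{u\<in>{1..d}. h1 u \<noteq> h' u} \<subset> {u\<in>{1..d}. h u \<noteq> h' u}"
    proof -
      have "{u\<in>{1..d}. h1 u \<noteq> h' u} \<subseteq> {u\<in>{1..d}. h u \<noteq> h' u} - {v}"
        using agree vC unfolding h1_def by auto
      then show ?thesis using v by blast
    qed
    have lt: "card {u\<in>{1..d}. h1 u \<noteq> h' u} < card {u\<in>{1..d}. h u \<noteq> h' u}"
      by (rule psubset_card_mono[OF _ sub]) simp
    have prems1: "\<forall>u\<in>{1..d}. (h1 u \<in> {i,j} \<longleftrightarrow> h' u \<in> {i,j}) \<and> (h1 u \<notin> {i,j} \<longrightarrow> h' u = h1 u)"
    proof
      fix u assume u: "u \<in> {1..d}"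
      show "(h1 u \<in> {i,j} \<longleftrightarrow> h' u \<in> {i,j}) \<and> (h1 u \<notin> {i,j} \<longrightarrow> h' u = h1 u)"
      proof (cases "u \<in> C")
        case True then show ?thesis using agree by simp
      next
        case False then show ?thesis using P1[OF u] P2[OF u] P3[OF u] u unfolding h1_def by auto
      qed
    qed
    have "kempe_equiv d E k h1 h'"
      using less.hyps[OF lt col1 less.prems(2-5) prems1] .
    then show ?thesis using sw unfolding kempe_equiv_def
      by (simp add: converse_rtranclp_into_rtranclp)
  qed
qed

lemma kempe_recolor':
  assumes "coloring E {1..d} k h" "coloring E {1..d} k h'" "i \<in> {1..k}" "j \<in> {1..k}" "i \<noteq> j"
   "\<forall>v\<in>{1..d}. (h v \<in> {i,j} \<longleftrightarrow> h' v \<in> {i,j}) \<and> (h v \<notin> {i,j} \<longrightarrow> h' v = h v)"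
  shows "kempe_equiv d E k h h'"
proof (cases "i < j")
  case True
  have "1 \<le> i" "j \<le> k" using assms(3,4) by auto
  then show ?thesis using kempe_recolor[OF assms(1,2) _ True _ assms(6)] by blast
next
  case False
  then have "j < i" using assms(5) by simp
  have ij: "{i,j} = {j,i}" by auto
  have "1 \<le> j" "i \<le> k" using assms(3,4) by auto
  then show ?thesis using kempe_recolor[OF assms(1,2) _ \<open>j < i\<close> _ assms(6)[unfolded ij]] by blast
qed

lemma monox_split:
  assumes "i \<in> {1..k}" "j \<in> {1..k}" "i \<noteq> j"
  shows "monox W k h = (\<Sum>l\<in>{1..k}-{i,j}. Poly_Mapping.single {v\<in>W. h v = l} 1)
     + Poly_Mapping.single {v\<in>W. h v = i} 1 + Poly_Mapping.single {v\<in>W. h v = j} 1"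
  unfolding monox_def by (rule sum_split2[OF assms]) simp

lemma card_ge2_other: "finite X \<Longrightarrow> card X \<ge> 2 \<Longrightarrow> i \<in> X \<Longrightarrow> \<exists>j\<in>X. j \<noteq> i"
proof (rule ccontr)
  assume "finite X" "card X \<ge> 2" "i \<in> X" "\<not> (\<exists>j\<in>X. j \<noteq> i)"
  then have "X \<subseteq> {i}" by blast
  then have "card X \<le> 1" using card_mono[of "{i}" X] by simp
  then show False using \<open>card X \<ge> 2\<close> by linarith
qed

lemma perm_kempe:
  assumes "coloring E {1..d} k h" "coloring E {1..d} k g" "monox {1..d} k h = monox {1..d} k g"
  shows "kempe_equiv d E k h g"
  using assms
proof (induction "card {v\<in>{1..d}. h v \<noteq> g v}" arbitrary: h rule: less_induct)
  case less
  show ?case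
  proof (cases "\<exists>v\<in>{1..d}. h v \<noteq> g v")
    case False
    then have "h = g" using coloring_eqI less.prems by blast
    then show ?thesis by (simp add: kempe_equiv_def)
  next
    case True
    then obtain v where v: "v\<in>{1..d}" "h v \<noteq> g v" by blast
    define a where "a = h v"
    define b where "b = g v"
    have ab: "a \<in> {1..k}" "b \<in> {1..k}" "a \<noteq> b"
      using less.prems(1,2) v unfolding a_def b_def coloring_iff by auto
    define S where "S = {u\<in>{1..d}. g u = b}"
    have "b \<in> {l\<in>{1..k}. {u\<in>{1..d}. g u = l} = S}" using ab unfolding S_def by auto
    then have "card {l\<in>{1..k}. {u\<in>{1..d}. g u = l} = S} \<noteq> 0" by auto
    moreover have "card {l\<in>{1..k}. {u\<in>{1..d}. g u = l} = S} = card {l\<in>{1..k}. {u\<in>{1..d}. h u = l} = S}"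
    proof -
      have "Poly_Mapping.lookup (monox {1..d} k g) S = Poly_Mapping.lookup (monox {1..d} k h) S"
        using less.prems(3) by simp
      then show ?thesis unfolding monox_def by (simp only: lookup_sum_single[OF finite_atLeastAtMost])
    qed
    ultimately have "card {l\<in>{1..k}. {u\<in>{1..d}. h u = l} = S} \<noteq> 0" by metis
    then obtain l where l: "l \<in> {1..k}" "{u\<in>{1..d}. h u = l} = S"
      by (metis (mono_tags, lifting) card.empty empty_Collect_eq)
    have "v \<in> S" using v unfolding S_def b_def by simp
    then have "l = a" using l v unfolding a_def by auto
    then have clsab: "{u\<in>{1..d}. h u = a} = {u\<in>{1..d}. g u = b}" using l unfolding S_def by simp
    define h2 where "h2 = (\<lambda>u. if u \<in> {1..d} then (if h u = a then b else if h u = b then a else h u) else undefined)"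
    have hcol: "\<forall>u\<in>{1..d}. \<forall>w\<in>{1..d}. {u, w} \<in> E \<longrightarrow> h u \<noteq> h w"
      using less.prems(1) unfolding coloring_iff by blast
    have col2: "coloring E {1..d} k h2"
      unfolding coloring_iff
    proof (intro conjI ballI allI impI)
      fix u assume "u \<in> {1..d}"
      then show "h2 u \<in> {1..k}" using less.prems(1) ab unfolding coloring_iff h2_def by auto
    next
      fix u assume "u \<notin> {1..d}"
      then show "h2 u = undefined" unfolding h2_def by auto
    next
      fix u w assume uw: "u \<in> {1..d}" "w \<in> {1..d}" "{u, w} \<in> E"
      then have "h u \<noteq> h w" using hcol by blast
      then show "h2 u \<noteq> h2 w" using uw unfolding h2_def by auto
    qed
    have eq1: "kempe_equiv d E k h h2"
      by (rule kempe_recolor'[OF less.prems(1) col2 ab]) (auto simp: h2_def)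
    have m2: "monox {1..d} k h2 = monox {1..d} k h"
    proof -
      have r: "(\<Sum>l\<in>{1..k}-{a,b}. Poly_Mapping.single {v\<in>{1..d}. h2 v = l} (1::nat))
            = (\<Sum>l\<in>{1..k}-{a,b}. Poly_Mapping.single {v\<in>{1..d}. h v = l} 1)"
      proof (rule sum.cong[OF refl])
        fix l assume "l \<in> {1..k}-{a,b}"
        then have "{v\<in>{1..d}. h2 v = l} = {v\<in>{1..d}. h v = l}" by (auto simp: h2_def)
        then show "Poly_Mapping.single {v\<in>{1..d}. h2 v = l} (1::nat) = Poly_Mapping.single {v\<in>{1..d}. h v = l} 1"
          by simp
      qed
      have "{v\<in>{1..d}. h2 v = a} = {v\<in>{1..d}. h v = b}" "{v\<in>{1..d}. h2 v = b} = {v\<in>{1..d}. h v = a}"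
        using ab by (auto simp: h2_def)
      then show ?thesis using monox_split[OF ab, of "{1..d}" h2] monox_split[OF ab, of "{1..d}" h] r
        by (simp add: ac_simps)
    qed
    have sub: "{u\<in>{1..d}. h2 u \<noteq> g u} \<subset> {u\<in>{1..d}. h u \<noteq> g u}"
    proof -
      have "{u\<in>{1..d}. h2 u \<noteq> g u} \<subseteq> {u\<in>{1..d}. h u \<noteq> g u} - {v}"
      proof
        fix u assume u: "u \<in> {u\<in>{1..d}. h2 u \<noteq> g u}"
        have "h u \<noteq> g u \<and> u \<noteq> v"
        proof (cases "h u = a")
          case True
          then have "g u = b" using clsab u by blast
          then show ?thesis using u True unfolding h2_def by auto
        next
          case False
          then show ?thesis
          proof (cases "h u = b")
            case True
            have "g u \<noteq> b"
            proof
              assume "g u = b"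
              then have "u \<in> {u\<in>{1..d}. h u = a}" using clsab u by auto
              then show False using True ab by auto
            qed
            then show ?thesis using True ab a_def by auto
          next
            case False
            then show ?thesis using u \<open>h u \<noteq> a\<close> a_def unfolding h2_def by auto
          qed
        qed
        then show "u \<in> {u\<in>{1..d}. h u \<noteq> g u} - {v}" using u by auto
      qed
      then show ?thesis using v by blast
    qed
    have lt: "card {u\<in>{1..d}. h2 u \<noteq> g u} < card {u\<in>{1..d}. h u \<noteq> g u}"
      by (rule psubset_card_mono[OF _ sub]) simp
    have "kempe_equiv d E k h2 g"
      using less.hyps[OF lt col2 less.prems(2)] m2 less.prems(3) by simp
    then show ?thesis using eq1 unfolding kempe_equiv_def by simp
  qed
qed

lemma move:
  assumes hc: "coloring E {1..d} k h" and W: "W \<subseteq> {1..d}"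
    and f1: "coloring E W 2 f1" and f2: "coloring E W 2 f2"
    and eq: "w + (Poly_Mapping.single {v\<in>W. f1 v = 1} 1 + Poly_Mapping.single {v\<in>W. f1 v = 2} 1) = monox {1..d} k h"
  shows "\<exists>h'. coloring E {1..d} k h' \<and> kempe_equiv d E k h h' \<and>
     monox {1..d} k h' = w + (Poly_Mapping.single {v\<in>W. f2 v = 1} 1 + Poly_Mapping.single {v\<in>W. f2 v = 2} 1)"
proof -
  define A where "A = {v\<in>W. f1 v = 1}"
  define B where "B = {v\<in>W. f1 v = 2}"
  define A' where "A' = {v\<in>W. f2 v = 1}"
  define B' where "B' = {v\<in>W. f2 v = 2}"
  have cnt: "card {l\<in>{1..k}. {v\<in>{1..d}. h v = l} = S} =
      Poly_Mapping.lookup w S + Poly_Mapping.lookup (Poly_Mapping.single A (1::nat) + Poly_Mapping.single B 1) S" for S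
  proof -
    have "Poly_Mapping.lookup (monox {1..d} k h) S = Poly_Mapping.lookup (w + (Poly_Mapping.single A 1 + Poly_Mapping.single B 1)) S"
      using eq unfolding A_def B_def by simp
    then show ?thesis unfolding monox_def lookup_add
      by (simp only: lookup_sum_single[OF finite_atLeastAtMost])
  qed
  have "card {l\<in>{1..k}. {v\<in>{1..d}. h v = l} = A} \<ge> 1"
    using cnt[of A] by (simp add: lookup_add lookup_single)
  then have "{l\<in>{1..k}. {v\<in>{1..d}. h v = l} = A} \<noteq> {}" by (metis card.empty not_one_le_zero)
  then obtain i where i: "i \<in> {1..k}" "{v\<in>{1..d}. h v = i} = A" by blast
  obtain j where j: "j \<in> {1..k}" "{v\<in>{1..d}. h v = j} = B" "j \<noteq> i"
  proof (cases "A = B")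
    case True
    then have "card {l\<in>{1..k}. {v\<in>{1..d}. h v = l} = A} \<ge> 2"
      using cnt[of A] by (simp add: lookup_add lookup_single)
    then obtain j where "j \<in> {l\<in>{1..k}. {v\<in>{1..d}. h v = l} = A}" "j \<noteq> i"
      using card_ge2_other[of "{l\<in>{1..k}. {v\<in>{1..d}. h v = l} = A}" i] i by auto
    then show ?thesis using that True by auto
  next
    case False
    then have "card {l\<in>{1..k}. {v\<in>{1..d}. h v = l} = B} \<ge> 1"
      using cnt[of B] by (simp add: lookup_add lookup_single)
    then have "{l\<in>{1..k}. {v\<in>{1..d}. h v = l} = B} \<noteq> {}" by (metis card.empty not_one_le_zero)
    then obtain j where "j \<in> {1..k}" "{v\<in>{1..d}. h v = j} = B" by blast
    moreover have "j \<noteq> i" using False i calculation by auto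
    ultimately show ?thesis using that by blast
  qed
  have f1v: "\<forall>v\<in>W. f1 v \<in> {1..2}" using f1 unfolding coloring_iff by blast
  have f2v: "\<forall>v\<in>W. f2 v \<in> {1..2}" using f2 unfolding coloring_iff by blast
  have f2c: "\<forall>u\<in>W. \<forall>v\<in>W. {u, v} \<in> E \<longrightarrow> f2 u \<noteq> f2 v" using f2 unfolding coloring_iff by blast
  have hcol: "\<forall>u\<in>{1..d}. \<forall>w\<in>{1..d}. {u, w} \<in> E \<longrightarrow> h u \<noteq> h w"
    using hc unfolding coloring_iff by blast
  have hv: "\<forall>u\<in>{1..d}. h u \<in> {1..k}" "\<forall>u. u \<notin> {1..d} \<longrightarrow> h u = undefined"
    using hc unfolding coloring_iff by blast+
  have WU: "u \<in> W \<longleftrightarrow> h u \<in> {i,j}" if "u \<in> {1..d}" for u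
  proof
    assume "u \<in> W"
    then have "f1 u = 1 \<or> f1 u = 2" using f1v by auto
    then have "u \<in> A \<or> u \<in> B" using \<open>u \<in> W\<close> unfolding A_def B_def by auto
    then show "h u \<in> {i,j}" using i j by auto
  next
    assume "h u \<in> {i,j}"
    then have "u \<in> A \<or> u \<in> B" using i j that by auto
    then show "u \<in> W" unfolding A_def B_def by auto
  qed
  define h' where "h' = (\<lambda>u. if u \<in> W then (if f2 u = 1 then i else j) else h u)"
  have col': "coloring E {1..d} k h'"
    unfolding coloring_iff
  proof (intro conjI ballI allI impI)
    fix u assume "u \<in> {1..d}"
    then show "h' u \<in> {1..k}" using hv i j unfolding h'_def by auto
  next
    fix u assume "u \<notin> {1..d}"
    then show "h' u = undefined" using hv W unfolding h'_def by auto
  next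
    fix u v assume uv: "u \<in> {1..d}" "v \<in> {1..d}" "{u, v} \<in> E"
    show "h' u \<noteq> h' v"
    proof (cases "u \<in> W"; cases "v \<in> W")
      assume "u \<in> W" "v \<in> W"
      then have "f2 u \<noteq> f2 v" "f2 u \<in> {1..2}" "f2 v \<in> {1..2}" using f2c f2v uv by auto
      then show ?thesis using \<open>u \<in> W\<close> \<open>v \<in> W\<close> j(3) unfolding h'_def by auto
    next
      assume "u \<in> W" "v \<notin> W"
      then show ?thesis using WU[OF uv(2)] unfolding h'_def by auto
    next
      assume "u \<notin> W" "v \<in> W"
      then show ?thesis using WU[OF uv(1)] unfolding h'_def by auto
    next
      assume "u \<notin> W" "v \<notin> W"
      then show ?thesis using hcol uv unfolding h'_def by auto
    qed
  qed
  have ke: "kempe_equiv d E k h h'"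
  proof (rule kempe_recolor'[OF hc col' i(1) j(1) j(3)[symmetric]], intro ballI)
    fix u assume u: "u \<in> {1..d}"
    show "(h u \<in> {i,j} \<longleftrightarrow> h' u \<in> {i,j}) \<and> (h u \<notin> {i,j} \<longrightarrow> h' u = h u)"
      using WU[OF u] unfolding h'_def by auto
  qed
  have ij: "i \<noteq> j" using j(3) by simp
  have r: "(\<Sum>l\<in>{1..k}-{i,j}. Poly_Mapping.single {v\<in>{1..d}. h' v = l} (1::nat))
        = (\<Sum>l\<in>{1..k}-{i,j}. Poly_Mapping.single {v\<in>{1..d}. h v = l} 1)"
  proof (rule sum.cong[OF refl])
    fix l assume l: "l \<in> {1..k}-{i,j}"
    have "{v\<in>{1..d}. h' v = l} = {v\<in>{1..d}. h v = l}"
    proof (intro set_eqI iffI)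
      fix v assume "v \<in> {v\<in>{1..d}. h' v = l}"
      then show "v \<in> {v\<in>{1..d}. h v = l}" using l WU unfolding h'_def by (auto split: if_splits)
    next
      fix v assume "v \<in> {v\<in>{1..d}. h v = l}"
      then show "v \<in> {v\<in>{1..d}. h' v = l}" using l WU unfolding h'_def by (auto split: if_splits)
    qed
    then show "Poly_Mapping.single {v\<in>{1..d}. h' v = l} (1::nat) = Poly_Mapping.single {v\<in>{1..d}. h v = l} 1"
      by simp
  qed
  have ci: "{v\<in>{1..d}. h' v = i} = A'"
  proof (intro set_eqI iffI)
    fix v assume "v \<in> {v\<in>{1..d}. h' v = i}"
    then show "v \<in> A'" using WU ij unfolding h'_def A'_def by (auto split: if_splits)
  next
    fix v assume "v \<in> A'"
    then show "v \<in> {v\<in>{1..d}. h' v = i}" using W unfolding h'_def A'_def by auto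
  qed
  have cj: "{v\<in>{1..d}. h' v = j} = B'"
  proof (intro set_eqI iffI)
    fix v assume "v \<in> {v\<in>{1..d}. h' v = j}"
    then have v: "v \<in> {1..d}" "h' v = j" by auto
    show "v \<in> B'"
    proof (cases "v \<in> W")
      case True
      then have "f2 v \<noteq> 1" using v ij unfolding h'_def by auto
      moreover have "f2 v \<in> {1..2}" using f2v True by blast
      ultimately have "f2 v = 2" by auto
      then show ?thesis using True unfolding B'_def by simp
    next
      case False
      then have "h v = j" using v unfolding h'_def by simp
      then show ?thesis using WU[OF v(1)] False by simp
    qed
  next
    fix v assume "v \<in> B'"
    then show "v \<in> {v\<in>{1..d}. h' v = j}" using W unfolding h'_def B'_def by auto
  qed
  have "monox {1..d} k h = (\<Sum>l\<in>{1..k}-{i,j}. Poly_Mapping.single {v\<in>{1..d}. h v = l} 1) + (Poly_Mapping.single A 1 + Poly_Mapping.single B 1)"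
    using monox_split[OF i(1) j(1) ij, of "{1..d}" h] i j by (simp add: ac_simps)
  then have wR: "w = (\<Sum>l\<in>{1..k}-{i,j}. Poly_Mapping.single {v\<in>{1..d}. h v = l} 1)"
    using eq unfolding A_def B_def by simp
  have "monox {1..d} k h' = w + (Poly_Mapping.single A' 1 + Poly_Mapping.single B' 1)"
    using monox_split[OF i(1) j(1) ij, of "{1..d}" h'] ci cj r wR by (simp add: ac_simps)
  then show ?thesis using col' ke unfolding A'_def B'_def by blast
qed

lemma xmon2: "(xmon W 2 f :: 'a::comm_ring_1 spoly) =
   Poly_Mapping.single (Poly_Mapping.single {v\<in>W. f v = 1} 1 + Poly_Mapping.single {v\<in>W. f v = 2} 1) 1"
proof -
  have "{1..2::nat} = {1,2}" by auto
  then show ?thesis unfolding xmon_eq monox_def by simp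
qed

definition phi :: "(nat set \<Rightarrow>\<^sub>0 nat) set \<Rightarrow> 'a::comm_ring_1 spoly \<Rightarrow> 'a" where
  "phi K p = (\<Sum>m\<in>Poly_Mapping.keys p. if m \<in> K then Poly_Mapping.lookup p m else 0)"

lemma phi_alt:
  assumes "finite S" "Poly_Mapping.keys p \<subseteq> S"
  shows "phi K p = (\<Sum>m\<in>S. if m \<in> K then Poly_Mapping.lookup p m else 0)"
  unfolding phi_def
  by (rule sum.mono_neutral_left[OF assms(1,2)]) (auto simp: in_keys_iff)

lemma phi_add: "phi K (p + q) = phi K p + phi K q"
proof -
  let ?S = "Poly_Mapping.keys p \<union> Poly_Mapping.keys q"
  have f: "finite ?S" by simp
  have "phi K (p + q) = (\<Sum>m\<in>?S. if m \<in> K then Poly_Mapping.lookup (p + q) m else 0)"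
    by (rule phi_alt[OF f]) (rule keys_add)
  also have "\<dots> = (\<Sum>m\<in>?S. (if m \<in> K then Poly_Mapping.lookup p m else 0) + (if m \<in> K then Poly_Mapping.lookup q m else 0))"
    by (rule sum.cong) (auto simp: lookup_add)
  also have "\<dots> = phi K p + phi K q"
    by (simp add: sum.distrib phi_alt[OF f])
  finally show ?thesis .
qed

lemma phi_zero [simp]: "phi K 0 = 0"
  unfolding phi_def by simp

lemma phi_diff: "phi K (p - q) = phi K p - phi K q"
proof -
  have "phi K (p - q) + phi K q = phi K p" using phi_add[of K "p - q" q] by simp
  then show ?thesis by (simp add: eq_diff_eq)
qed

lemma phi_sum: "finite F \<Longrightarrow> phi K (\<Sum>b\<in>F. P b) = (\<Sum>b\<in>F. phi K (P b))"
  by (induction F rule: finite_induct) (auto simp: phi_add)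

lemma phi_single: "phi K (Poly_Mapping.single m a) = (if m \<in> K then a else 0)"
  unfolding phi_def by auto

lemma phi_mult_gen:
  assumes "\<And>w. w + m1 \<in> K \<longleftrightarrow> w + m2 \<in> K"
  shows "phi K (c * (Poly_Mapping.single m1 1 - Poly_Mapping.single m2 1)) = 0"
proof -
  have "c * (Poly_Mapping.single m1 1 - Poly_Mapping.single m2 1) =
     (\<Sum>w\<in>Poly_Mapping.keys c. Poly_Mapping.single w (Poly_Mapping.lookup c w) * (Poly_Mapping.single m1 1 - Poly_Mapping.single m2 1))"
    by (subst poly_decomp[of c]) (simp add: sum_distrib_right)
  also have "\<dots> = (\<Sum>w\<in>Poly_Mapping.keys c. Poly_Mapping.single (w + m1) (Poly_Mapping.lookup c w) - Poly_Mapping.single (w + m2) (Poly_Mapping.lookup c w))"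
    by (simp add: right_diff_distrib mult_single)
  finally show ?thesis using assms by (simp add: phi_sum phi_diff phi_single)
qed

lemma vars_add: "vars (p + q) \<subseteq> vars p \<union> vars q"
  unfolding vars_def using keys_add[of p q] by blast

lemma RG_add: "p \<in> RG d E \<Longrightarrow> q \<in> RG d E \<Longrightarrow> p + q \<in> RG d E"
  unfolding RG_def using vars_add by blast

lemma RG_zero: "0 \<in> RG d E"
  unfolding RG_def vars_def by simp

lemma ideal_gen_add:
  assumes R0: "0 \<in> R" and Radd: "\<And>x y. x \<in> R \<Longrightarrow> y \<in> R \<Longrightarrow> x + y \<in> R"
    and p: "p \<in> ideal_gen R B" and q: "q \<in> ideal_gen R B"
  shows "p + q \<in> ideal_gen R B"
proof -
  obtain F1 c1 where 1: "p = (\<Sum>b\<in>F1. c1 b * b)" "finite F1" "F1 \<subseteq> B" "\<forall>b\<in>F1. c1 b \<in> R"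
    using p unfolding ideal_gen_def by blast
  obtain F2 c2 where 2: "q = (\<Sum>b\<in>F2. c2 b * b)" "finite F2" "F2 \<subseteq> B" "\<forall>b\<in>F2. c2 b \<in> R"
    using q unfolding ideal_gen_def by blast
  define c where "c b = (if b \<in> F1 then c1 b else 0) + (if b \<in> F2 then c2 b else 0)" for b
  have fin: "finite (F1 \<union> F2)" using 1 2 by simp
  have s1: "(\<Sum>b\<in>F1 \<union> F2. (if b \<in> F1 then c1 b else 0) * b) = p"
  proof -
    have "(\<Sum>b\<in>F1 \<union> F2. (if b \<in> F1 then c1 b else 0) * b) = (\<Sum>b\<in>F1 \<union> F2. if b \<in> F1 then c1 b * b else 0)"
      by (rule sum.cong) auto
    also have "\<dots> = (\<Sum>b\<in>(F1 \<union> F2) \<inter> F1. c1 b * b)" by (rule sum.inter_restrict[OF fin, symmetric])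
    also have "(F1 \<union> F2) \<inter> F1 = F1" by blast
    finally show ?thesis using 1 by simp
  qed
  have s2: "(\<Sum>b\<in>F1 \<union> F2. (if b \<in> F2 then c2 b else 0) * b) = q"
  proof -
    have "(\<Sum>b\<in>F1 \<union> F2. (if b \<in> F2 then c2 b else 0) * b) = (\<Sum>b\<in>F1 \<union> F2. if b \<in> F2 then c2 b * b else 0)"
      by (rule sum.cong) auto
    also have "\<dots> = (\<Sum>b\<in>(F1 \<union> F2) \<inter> F2. c2 b * b)" by (rule sum.inter_restrict[OF fin, symmetric])
    also have "(F1 \<union> F2) \<inter> F2 = F2" by blast
    finally show ?thesis using 2 by simp
  qed
  have "p + q = (\<Sum>b\<in>F1 \<union> F2. c b * b)"
    unfolding c_def distrib_right sum.distrib s1 s2 ..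
  moreover have "\<forall>b\<in>F1 \<union> F2. c b \<in> R"
    using 1 2 R0 Radd unfolding c_def by auto
  ultimately show ?thesis using fin 1 2 unfolding ideal_gen_def by blast
qed

lemma ideal_gen_single: "b \<in> B \<Longrightarrow> c \<in> R \<Longrightarrow> c * b \<in> ideal_gen R B"
  unfolding ideal_gen_def by (rule CollectI, rule exI[of _ "{b}"], rule exI[of _ "\<lambda>_. c"]) simp

lemma J_add: "p \<in> J d E \<Longrightarrow> q \<in> J d E \<Longrightarrow> p + q \<in> J d E"
  unfolding J_def by (rule ideal_gen_add[OF RG_zero RG_add])

lemma J_zero: "0 \<in> J d E"
  unfolding J_def ideal_gen_def by (rule CollectI, rule exI[of _ "{}"]) simp

lemma stable_cls:
  assumes "simple_graph d E" "coloring E {1..d} k h"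
  shows "stable d E {v\<in>{1..d}. h v = l}"
  unfolding stable_def
proof (intro conjI ballI)
  show "{v\<in>{1..d}. h v = l} \<subseteq> {1..d}" by blast
next
  fix e assume "e \<in> E"
  then obtain u v where e: "e = {u, v}" "u \<noteq> v" "u \<in> {1..d}" "v \<in> {1..d}"
    using assms(1) unfolding simple_graph_def by blast
  have "h u \<noteq> h v" using assms(2) e \<open>e \<in> E\<close> unfolding coloring_iff by blast
  then show "\<not> e \<subseteq> {v\<in>{1..d}. h v = l}" using e by auto
qed

lemma component_subset: "component E U v \<subseteq> U \<union> {v}"
proof
  fix u assume "u \<in> component E U v"
  then have "(v, u) \<in> {(a, b). a \<in> U \<and> b \<in> U \<and> {a, b} \<in> E}\<^sup>*" unfolding component_def by simp
  then show "u \<in> U \<union> {v}" by (rule rtranclE) auto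
qed

lemma step_J:
  assumes sg: "simple_graph d E" and sw: "kempe_switch d E k h h'"
  shows "(xmon {1..d} k h - xmon {1..d} k h' :: 'a::comm_ring_1 spoly) \<in> J d E"
proof -
  obtain i j C where hc: "coloring E {1..d} k h" and hc': "coloring E {1..d} k h'"
    and ij: "1 \<le> i" "i < j" "j \<le> k"
    and isc: "is_component E {v\<in>{1..d}. h v = i \<or> h v = j} C"
    and h'def: "h' = (\<lambda>v. if v \<in> C then (if h v = i then j else i) else h v)"
    using sw unfolding kempe_switch_def by blast
  define W where "W = {v\<in>{1..d}. h v = i \<or> h v = j}"
  have CW: "C \<subseteq> W" using isc component_subset unfolding is_component_def W_def by blast
  have WU: "u \<in> W \<longleftrightarrow> h u \<in> {i,j}" if "u \<in> {1..d}" for u using that unfolding W_def by auto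
  have h'W: "h' u \<in> {i,j}" if "u \<in> W" for u using that CW unfolding h'def W_def by auto
  have h'nW: "h' u = h u" if "u \<notin> W" for u using that CW unfolding h'def by auto
  have Wd: "W \<subseteq> {1..d}" unfolding W_def by auto
  define f1 where "f1 = (\<lambda>v. if v \<in> W then (if h v = i then 1 else 2::nat) else undefined)"
  define f2 where "f2 = (\<lambda>v. if v \<in> W then (if h' v = i then 1 else 2::nat) else undefined)"
  have hcol: "\<forall>u\<in>{1..d}. \<forall>w\<in>{1..d}. {u, w} \<in> E \<longrightarrow> h u \<noteq> h w"
    using hc unfolding coloring_iff by blast
  have h'col: "\<forall>u\<in>{1..d}. \<forall>w\<in>{1..d}. {u, w} \<in> E \<longrightarrow> h' u \<noteq> h' w"
    using hc' unfolding coloring_iff by blast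
  have c1: "coloring E W 2 f1" unfolding coloring_iff
  proof (intro conjI ballI allI impI)
    fix u w assume "u \<in> W" "w \<in> W" "{u, w} \<in> E"
    then have "h u \<noteq> h w" "h u \<in> {i,j}" "h w \<in> {i,j}" using hcol Wd WU by auto
    then show "f1 u \<noteq> f1 w" using \<open>u \<in> W\<close> \<open>w \<in> W\<close> unfolding f1_def by auto
  qed (auto simp: f1_def)
  have c2: "coloring E W 2 f2" unfolding coloring_iff
  proof (intro conjI ballI allI impI)
    fix u w assume "u \<in> W" "w \<in> W" "{u, w} \<in> E"
    then have "h' u \<noteq> h' w" "h' u \<in> {i,j}" "h' w \<in> {i,j}" using h'col Wd h'W by auto
    then show "f2 u \<noteq> f2 w" using \<open>u \<in> W\<close> \<open>w \<in> W\<close> unfolding f2_def by auto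
  qed (auto simp: f2_def)
  have iin: "i \<in> {1..k}" "j \<in> {1..k}" "i \<noteq> j" using ij by auto
  have a1: "{v\<in>W. f1 v = 1} = {v\<in>{1..d}. h v = i}" using Wd WU unfolding f1_def by auto
  have b1: "{v\<in>W. f1 v = 2} = {v\<in>{1..d}. h v = j}" using Wd WU iin unfolding f1_def by auto
  have a2: "{v\<in>W. f2 v = 1} = {v\<in>{1..d}. h' v = i}"
    using Wd h'W h'nW WU unfolding f2_def by (auto; metis insertI1)
  have b2: "{v\<in>W. f2 v = 2} = {v\<in>{1..d}. h' v = j}"
  proof (intro set_eqI iffI)
    fix v assume "v \<in> {v\<in>W. f2 v = 2}"
    then show "v \<in> {v\<in>{1..d}. h' v = j}" using Wd h'W[of v] unfolding f2_def by (auto split: if_splits)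
  next
    fix v assume v: "v \<in> {v\<in>{1..d}. h' v = j}"
    show "v \<in> {v\<in>W. f2 v = 2}"
    proof (cases "v \<in> W")
      case True then show ?thesis using v iin unfolding f2_def by auto
    next
      case False then show ?thesis using v h'nW[of v] WU[of v] by auto
    qed
  qed
  define R where "R = (\<Sum>l\<in>{1..k}-{i,j}. Poly_Mapping.single {v\<in>{1..d}. h v = l} (1::nat))"
  have r: "(\<Sum>l\<in>{1..k}-{i,j}. Poly_Mapping.single {v\<in>{1..d}. h' v = l} (1::nat)) = R"
    unfolding R_def
  proof (rule sum.cong[OF refl])
    fix l assume l: "l \<in> {1..k}-{i,j}"
    have "{v\<in>{1..d}. h' v = l} = {v\<in>{1..d}. h v = l}"
    proof (intro set_eqI iffI)
      fix v assume "v \<in> {v\<in>{1..d}. h' v = l}"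
      then show "v \<in> {v\<in>{1..d}. h v = l}" using l h'W[of v] h'nW[of v] by (cases "v \<in> W") auto
    next
      fix v assume "v \<in> {v\<in>{1..d}. h v = l}"
      then show "v \<in> {v\<in>{1..d}. h' v = l}" using l WU[of v] h'nW[of v] by (cases "v \<in> W") auto
    qed
    then show "Poly_Mapping.single {v\<in>{1..d}. h' v = l} (1::nat) = Poly_Mapping.single {v\<in>{1..d}. h v = l} 1"
      by simp
  qed
  have m1: "monox {1..d} k h = R + (Poly_Mapping.single {v\<in>W. f1 v = 1} 1 + Poly_Mapping.single {v\<in>W. f1 v = 2} 1)"
    using monox_split[OF iin, of "{1..d}" h] a1 b1 unfolding R_def by (simp add: ac_simps)
  have m2: "monox {1..d} k h' = R + (Poly_Mapping.single {v\<in>W. f2 v = 1} 1 + Poly_Mapping.single {v\<in>W. f2 v = 2} 1)"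
    using monox_split[OF iin, of "{1..d}" h'] a2 b2 r by (simp add: ac_simps)
  have eq: "(xmon {1..d} k h - xmon {1..d} k h' :: 'a spoly) =
      Poly_Mapping.single R 1 * (xmon W 2 f1 - xmon W 2 f2)"
    unfolding xmon2 unfolding xmon_eq m1 m2 by (simp add: right_diff_distrib mult_single)
  have gen: "(xmon W 2 f1 - xmon W 2 f2 :: 'a spoly) \<in> J_gens d E"
    unfolding J_gens_def using Wd c1 c2 by blast
  have keysR: "Poly_Mapping.keys R \<subseteq> (\<Union>l\<in>{1..k}-{i,j}. Poly_Mapping.keys (Poly_Mapping.single {v\<in>{1..d}. h v = l} (1::nat)))"
    unfolding R_def by (rule keys_sum)
  have "Poly_Mapping.single R (1::'a) \<in> RG d E"
    unfolding RG_def vars_def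
  proof (intro CollectI ballI)
    fix S assume "S \<in> \<Union> (Poly_Mapping.keys ` Poly_Mapping.keys (Poly_Mapping.single R (1::'a)))"
    then have "S \<in> Poly_Mapping.keys R" by simp
    then obtain l where "S = {v\<in>{1..d}. h v = l}" using keysR by (auto split: if_splits)
    then show "stable d E S" using stable_cls[OF sg hc] by simp
  qed
  then show ?thesis unfolding eq J_def by (rule ideal_gen_single[OF gen])
qed

lemma forward:
  assumes sg: "simple_graph d E" and ke: "kempe_equiv d E k f g"
  shows "(xmon {1..d} k f - xmon {1..d} k g :: 'a::comm_ring_1 spoly) \<in> J d E"
  using ke unfolding kempe_equiv_def
proof (induction rule: rtranclp_induct)
  case base then show ?case using J_zero by simp
next
  case (step y z)
  have "(xmon {1..d} k f - xmon {1..d} k z :: 'a spoly) =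
     (xmon {1..d} k f - xmon {1..d} k y) + (xmon {1..d} k y - xmon {1..d} k z)" by simp
  then show ?case using J_add[OF step.IH step_J[OF sg step.hyps(2)]] by simp
qed

lemma backward:
  assumes fc: "coloring E {1..d} k f" and gc: "coloring E {1..d} k g"
    and mem: "(xmon {1..d} k f - xmon {1..d} k g :: 'a::field spoly) \<in> J d E"
  shows "kempe_equiv d E k f g"
proof -
  define K where "K = {m. \<exists>h. coloring E {1..d} k h \<and> kempe_equiv d E k f h \<and> monox {1..d} k h = m}"
  obtain F c where Fc: "(xmon {1..d} k f - xmon {1..d} k g :: 'a spoly) = (\<Sum>b\<in>F. c b * b)" "finite F"
    "F \<subseteq> J_gens d E"
    using mem unfolding J_def ideal_gen_def by blast
  have inv: "w + (Poly_Mapping.single {v\<in>W. f1 v = 1} 1 + Poly_Mapping.single {v\<in>W. f1 v = 2} 1) \<in> K"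
    if prem: "w + (Poly_Mapping.single {v\<in>W. f2 v = 1} 1 + Poly_Mapping.single {v\<in>W. f2 v = 2} 1) \<in> K"
       "W \<subseteq> {1..d}" "coloring E W 2 f1" "coloring E W 2 f2" for w W f1 f2
  proof -
    obtain h where h: "coloring E {1..d} k h" "kempe_equiv d E k f h"
      "monox {1..d} k h = w + (Poly_Mapping.single {v\<in>W. f2 v = 1} 1 + Poly_Mapping.single {v\<in>W. f2 v = 2} 1)"
      using prem(1) unfolding K_def by blast
    obtain h' where "coloring E {1..d} k h'" "kempe_equiv d E k h h'"
      "monox {1..d} k h' = w + (Poly_Mapping.single {v\<in>W. f1 v = 1} 1 + Poly_Mapping.single {v\<in>W. f1 v = 2} 1)"
      using move[OF h(1) prem(2) prem(4) prem(3) h(3)[symmetric]] by blast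
    moreover have "kempe_equiv d E k f h'"
      using h(2) \<open>kempe_equiv d E k h h'\<close> unfolding kempe_equiv_def by simp
    ultimately show ?thesis unfolding K_def by blast
  qed
  have zero: "phi K (c b * b) = 0" if bF: "b \<in> F" for b
  proof -
    obtain W f1 f2 where b: "b = xmon W 2 f1 - xmon W 2 f2" "W \<subseteq> {1..d}"
      "coloring E W 2 f1" "coloring E W 2 f2"
      using Fc(3) bF unfolding J_gens_def by blast
    show ?thesis unfolding b(1) xmon2
      by (rule phi_mult_gen) (use inv b in blast)
  qed
  have "phi K (xmon {1..d} k f - xmon {1..d} k g :: 'a spoly) = 0"
  proof -
    have "phi K (\<Sum>b\<in>F. c b * b) = (\<Sum>b\<in>F. phi K (c b * b))" by (rule phi_sum[OF Fc(2)])
    also have "\<dots> = 0" using zero by simp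
    finally show ?thesis unfolding Fc(1) .
  qed
  moreover have "monox {1..d} k f \<in> K" unfolding K_def kempe_equiv_def using fc by blast
  ultimately have "monox {1..d} k g \<in> K"
    unfolding xmon_eq phi_diff phi_single by (auto split: if_splits)
  then obtain h where h: "coloring E {1..d} k h" "kempe_equiv d E k f h" "monox {1..d} k h = monox {1..d} k g"
    unfolding K_def by blast
  have "kempe_equiv d E k h g" by (rule perm_kempe[OF h(1) gc h(3)])
  then show ?thesis using h(2) unfolding kempe_equiv_def by simp
qed

theorem theorem1p1:
  fixes d k :: nat and E :: "nat set set" and f g :: "nat \<Rightarrow> nat"
  assumes "simple_graph d E" and "k \<ge> 1"
    and "coloring E {1..d} k f" and "coloring E {1..d} k g"
  shows "kempe_equiv d E k f g \<longleftrightarrow>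
         (xmon {1..d} k f - xmon {1..d} k g :: 'a::field spoly) \<in> J d E"
  using forward[OF assms(1)] backward[OF assms(3,4)] by blast

end
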